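(* Let $(\mathcal{S}_1,\mathcal{S}_2)$ be an $S$-pair with $|S| = n \ge 3$. Then there is at most one element $s \in S$ with the following property: there exist a subset $D \subseteq S - s$ with $|D| = n-2$ and positive integers $i,j$ with $i+j = n-1$ such that $X \cup \{s\} \in \mathcal{S}_1$ for every $i$-element subset $X$ of $D$, and every $j$-element subset of $D$ lies in $\mathcal{S}_2$.
   Context: Let $S$ be a finite nonempty set and $\mathcal{S}_1, \mathcal{S}_2 \subseteq 2^S$. The pair $(\mathcal{S}_1,\mathcal{S}_2)$ is an $S$-pair if: (S1) for $i=1,2$, if $A,B \in \mathcal{S}_i$ with $B \subset A$ and $|A| = |B|+1$, then every $|B|$-element subset of $A$ lies in $\mathcal{S}_i$; (S2) for $i=1,2$, if $A,B \in \mathcal{S}_i$ with $|A|=|B|$ and $|A\cap B| = |A|-1$, then $A\cup B \in \mathcal{S}_i$; (S3) for $i=1,2$, not every singleton $\{s\}$, $s\in S$, lies in $\mathcal{S}_i$, and $S \notin \mathcal{S}_i$; (S4) for $k = 1,\dots,|S|-1$ and $x\in S$, if every $k$-element subset of $S - x$ lies in $\mathcal{S}_1$, then not every $(|S|-k)$-element subset of $S-x$ lies in $\mathcal{S}_2$. *)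

theory Defs
  imports Main
begin

text \<open>A single family satisfying (S1)-(S3).\<close>
definition S_family :: "'a set \<Rightarrow> 'a set set \<Rightarrow> bool" where
  "S_family S F \<longleftrightarrow>
     F \<subseteq> Pow S \<and>
     (\<forall>A\<in>F. \<forall>B\<in>F. B \<subset> A \<and> card A = card B + 1 \<longrightarrow>
        (\<forall>C. C \<subseteq> A \<and> card C = card B \<longrightarrow> C \<in> F)) \<and>
     (\<forall>A\<in>F. \<forall>B\<in>F. card A = card B \<and> card (A \<inter> B) = card A - 1 \<longrightarrow> A \<union> B \<in> F) \<and>
     \<not> (\<forall>s\<in>S. {s} \<in> F) \<and> S \<notin> F"

definition S_pair :: "'a set \<Rightarrow> 'a set set \<Rightarrow> 'a set set \<Rightarrow> bool" where
  "S_pair S F1 F2 \<longleftrightarrow>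
     finite S \<and> S \<noteq> {} \<and> S_family S F1 \<and> S_family S F2 \<and>
     (\<forall>k\<in>{1..card S - 1}. \<forall>x\<in>S.
        (\<forall>X. X \<subseteq> S - {x} \<and> card X = k \<longrightarrow> X \<in> F1) \<longrightarrow>
        \<not> (\<forall>X. X \<subseteq> S - {x} \<and> card X = card S - k \<longrightarrow> X \<in> F2))"

end

theory Submission
  imports Defs
begin

lemma fam_S2: "S_family S F \<Longrightarrow> A \<in> F \<Longrightarrow> B \<in> F \<Longrightarrow> card A = card B \<Longrightarrow>
   card (A \<inter> B) = card A - 1 \<Longrightarrow> A \<union> B \<in> F"
  unfolding S_family_def by blast

lemma fam_S1: "S_family S F \<Longrightarrow> A \<in> F \<Longrightarrow> B \<in> F \<Longrightarrow> B \<subset> A \<Longrightarrow> card A = card B + 1 \<Longrightarrow>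
   C \<subseteq> A \<Longrightarrow> card C = card B \<Longrightarrow> C \<in> F"
  unfolding S_family_def by blast

lemma fam_S3: "S_family S F \<Longrightarrow> S \<notin> F"
  unfolding S_family_def by blast

lemma up_aux:
  assumes F: "S_family S F" and fD: "finite D" and fE: "finite E" and disj: "E \<inter> D = {}"
    and j1: "j \<ge> 1"
    and base: "\<forall>X. X \<subseteq> D \<and> card X = j \<longrightarrow> E \<union> X \<in> F"
  shows "X \<subseteq> D \<Longrightarrow> card X = j + d \<Longrightarrow> E \<union> X \<in> F"
proof (induction d arbitrary: X)
  case 0 thus ?case using base by simp
next
  case (Suc d)
  have fX: "finite X" using Suc.prems fD finite_subset by blast
  have c2: "card X \<ge> 2" using Suc.prems j1 by simp
  then have "X \<noteq> {}" by auto
  then obtain x where x: "x \<in> X" by blast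
  have "card (X - {x}) \<ge> 1" using c2 x fX by simp
  then have "X - {x} \<noteq> {}" by (metis card.empty not_one_le_zero)
  then obtain y where y: "y \<in> X" "y \<noteq> x" by blast
  have cu: "card (E \<union> Z) = card E + card Z" if "Z \<subseteq> D" for Z
    using that fE fD disj by (meson card_Un_disjoint disjoint_iff finite_subset subsetD)
  have A: "E \<union> (X - {x}) \<in> F" using Suc.IH[of "X - {x}"] Suc.prems x fX by auto
  have B: "E \<union> (X - {y}) \<in> F" using Suc.IH[of "X - {y}"] Suc.prems y fX by auto
  have cA: "card (E \<union> (X - {x})) = card E + (j + d)"
    using cu[of "X - {x}"] Suc.prems x fX by auto
  have cB: "card (E \<union> (X - {y})) = card E + (j + d)"
    using cu[of "X - {y}"] Suc.prems y fX by auto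
  have I: "(E \<union> (X - {x})) \<inter> (E \<union> (X - {y})) = E \<union> (X - {x} - {y})" by blast
  have cI: "card (E \<union> (X - {x} - {y})) = card E + (j + d) - 1"
    using cu[of "X - {x} - {y}"] Suc.prems x y fX j1 by auto
  have U: "(E \<union> (X - {x})) \<union> (E \<union> (X - {y})) = E \<union> X" using x y by blast
  show ?case using fam_S2[OF F A B] cA cB cI I U by simp
qed

lemma up:
  assumes F: "S_family S F" and fD: "finite D" and fE: "finite E" and disj: "E \<inter> D = {}"
    and j1: "j \<ge> 1"
    and base: "\<forall>X. X \<subseteq> D \<and> card X = j \<longrightarrow> E \<union> X \<in> F"
    and X: "X \<subseteq> D" "j \<le> card X"
  shows "E \<union> X \<in> F"
  using up_aux[OF F fD fE disj j1 base X(1), of "card X - j"] X by simp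

lemma get_a:
  assumes "finite S" "s \<in> S" "D \<subseteq> S - {s}" "card D = card S - 2" "card S \<ge> 3"
  shows "\<exists>a. a \<in> S \<and> a \<noteq> s \<and> D = S - {s,a}"
proof -
  have fD: "finite D" using assms finite_subset by blast
  have "card (S - {s} - D) = card (S - {s}) - card D" using card_Diff_subset[OF fD assms(3)] .
  also have "\<dots> = 1" using assms by simp
  finally obtain a where "S - {s} - D = {a}" using card_1_singletonE by blast
  then show ?thesis using assms(3) by blast
qed

lemma core:
  assumes SP: "S_pair S F1 F2" and n3: "card S \<ge> 3"
    and sS: "s \<in> S" and tS: "t \<in> S" and aS: "a \<in> S" and st: "s \<noteq> t" and sa: "s \<noteq> a" and ta: "t \<noteq> a"
    and i0: "i > 0" and j0: "j > 0" and ij: "i + j = card S - 1" and j'0: "j' > 0" and jj: "j' \<le> j"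
    and H1: "\<forall>X. X \<subseteq> S - {s,a} \<and> card X = i \<longrightarrow> insert s X \<in> F1"
    and H2: "\<forall>X. X \<subseteq> S - {s,a} \<and> card X = j \<longrightarrow> X \<in> F2"
    and H3: "\<forall>X. X \<subseteq> S - {t,a} \<and> card X = j' \<longrightarrow> X \<in> F2"
  shows False
proof -
  have fS: "finite S" and F1: "S_family S F1" and F2: "S_family S F2"
    using SP unfolding S_pair_def by auto
  have S4: "\<forall>k\<in>{1..card S - 1}. \<forall>x\<in>S.
        (\<forall>X. X \<subseteq> S - {x} \<and> card X = k \<longrightarrow> X \<in> F1) \<longrightarrow>
        \<not> (\<forall>X. X \<subseteq> S - {x} \<and> card X = card S - k \<longrightarrow> X \<in> F2)"
    using SP unfolding S_pair_def by auto
  have fsa: "finite (S - {s,a})" "finite (S - {t,a})" using fS by auto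
  have H1': "\<forall>X. X \<subseteq> S - {s,a} \<and> card X = i \<longrightarrow> {s} \<union> X \<in> F1" using H1 by simp
  have up1: "insert s X \<in> F1" if "X \<subseteq> S - {s,a}" "i \<le> card X" for X
    using up[OF F1 fsa(1) _ _ _ H1' that] i0 by auto
  have H3': "\<forall>X. X \<subseteq> S - {t,a} \<and> card X = j' \<longrightarrow> {} \<union> X \<in> F2" using H3 by simp
  have up3: "X \<in> F2" if "X \<subseteq> S - {t,a}" "j' \<le> card X" for X
    using up[OF F2 fsa(2) _ _ _ H3' that] j'0 by auto
  have C1: "\<forall>Y. Y \<subseteq> S - {a} \<and> card Y = i + 1 \<longrightarrow> Y \<in> F1"
  proof (intro allI impI)
    fix Y assume Y: "Y \<subseteq> S - {a} \<and> card Y = i + 1"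
    have fY: "finite Y" using Y fS finite_subset by blast
    show "Y \<in> F1"
    proof (cases "s \<in> Y")
      case True
      have "Y - {s} \<subseteq> S - {s,a}" "card (Y - {s}) = i" using Y fY True by auto
      then have "insert s (Y - {s}) \<in> F1" using H1[rule_format, of "Y - {s}"] by blast
      then show ?thesis using True by (simp add: insert_absorb)
    next
      case False
      then have YD: "Y \<subseteq> S - {s,a}" using Y by blast
      have "Y \<noteq> {}" using Y by auto
      then obtain y where y: "y \<in> Y" by blast
      have A: "insert s Y \<in> F1" using up1[OF YD] Y by simp
      have "Y - {y} \<subseteq> S - {s,a}" "card (Y - {y}) = i" using YD Y y fY by auto
      then have B: "insert s (Y - {y}) \<in> F1" using H1[rule_format, of "Y - {y}"] by blast
      have cA: "card (insert s Y) = i + 2" using False fY Y by simp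
      have cB: "card (insert s (Y - {y})) = i + 1" using False fY Y y by simp
      have sub: "insert s (Y - {y}) \<subset> insert s Y" using y False by auto
      show ?thesis
        by (rule fam_S1[OF F1 A B sub]) (use cA cB Y in auto)
    qed
  qed
  have C2: "\<forall>Z. Z \<subseteq> S - {a} \<and> card Z = j \<longrightarrow> Z \<in> F2"
  proof (intro allI impI)
    fix Z assume Z: "Z \<subseteq> S - {a} \<and> card Z = j"
    have fZ: "finite Z" using Z fS finite_subset by blast
    show "Z \<in> F2"
    proof (cases "s \<in> Z")
      case False
      then have "Z \<subseteq> S - {s,a}" using Z by blast
      then show ?thesis using H2[rule_format, of Z] Z by blast
    next
      case sZ: True
      show ?thesis
      proof (cases "t \<in> Z")
        case False
        then have "Z \<subseteq> S - {t,a}" using Z by blast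
        then show ?thesis using up3[of Z] Z jj by simp
      next
        case tZ: True
        have "card (S - {a}) = card S - 1" using aS fS by simp
        then have "card Z < card (S - {a})" using Z ij i0 by simp
        then have "Z \<noteq> S - {a}" by auto
        then obtain w where w: "w \<in> S - {a}" "w \<notin> Z" using Z by blast
        define A where "A = insert w Z"
        have fA: "finite A" using fZ A_def by simp
        have cA: "card A = j + 1" using w fZ Z A_def by simp
        have cAs: "card (A - {s}) = j" using cA sZ A_def fA by simp
        have cAt: "card (A - {t}) = j" using cA tZ A_def fA by simp
        have "A - {s} \<subseteq> S - {s,a}" using A_def w Z by blast
        then have As: "A - {s} \<in> F2" using H2[rule_format, of "A - {s}"] cAs by blast
        have "A - {t} \<subseteq> S - {t,a}" using A_def w Z by blast
        then have At: "A - {t} \<in> F2" using up3[of "A - {t}"] cAt jj by simp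
        have I: "(A - {s}) \<inter> (A - {t}) = A - {s} - {t}" by blast
        have cI: "card (A - {s} - {t}) = j - 1" using cAs tZ st A_def fA by simp
        have U: "(A - {s}) \<union> (A - {t}) = A" using st by blast
        have AF: "A \<in> F2" using fam_S2[OF F2 As At] cAs cAt I cI U by simp
        have sub: "A - {s} \<subset> A" using sZ A_def by blast
        show ?thesis
          by (rule fam_S1[OF F2 AF As sub]) (use cA cAs Z A_def in auto)
      qed
    qed
  qed
  have k: "i + 1 \<in> {1..card S - 1}" using ij j0 by auto
  have "card S - (i + 1) = j" using ij by simp
  then show False using S4 k aS C1 C2 by metis
qed

theorem mainTheorem9:
  fixes S :: "'a set" and F1 F2 :: "'a set set" and P :: "'a \<Rightarrow> bool"
  assumes "S_pair S F1 F2" and "card S \<ge> 3"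
  defines "P \<equiv> (\<lambda>s. s \<in> S \<and>
           (\<exists>D i j. D \<subseteq> S - {s} \<and> card D = card S - 2 \<and> i > 0 \<and> j > 0 \<and>
              i + j = card S - 1 \<and>
              (\<forall>X. X \<subseteq> D \<and> card X = i \<longrightarrow> insert s X \<in> F1) \<and>
              (\<forall>X. X \<subseteq> D \<and> card X = j \<longrightarrow> X \<in> F2)))"
  shows "\<forall>s t. P s \<and> P t \<longrightarrow> s = t"
proof (intro allI impI)
  fix s t assume Pst: "P s \<and> P t"
  have fS: "finite S" and F1: "S_family S F1"
    using assms(1) unfolding S_pair_def by auto
  obtain Ds i j where s: "s \<in> S" "Ds \<subseteq> S - {s}" "card Ds = card S - 2" "i > 0" "j > 0"
     "i + j = card S - 1" "\<forall>X. X \<subseteq> Ds \<and> card X = i \<longrightarrow> insert s X \<in> F1"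
     "\<forall>X. X \<subseteq> Ds \<and> card X = j \<longrightarrow> X \<in> F2"
    using Pst unfolding P_def by auto
  obtain Dt i' j' where t: "t \<in> S" "Dt \<subseteq> S - {t}" "card Dt = card S - 2" "i' > 0" "j' > 0"
     "i' + j' = card S - 1" "\<forall>X. X \<subseteq> Dt \<and> card X = i' \<longrightarrow> insert t X \<in> F1"
     "\<forall>X. X \<subseteq> Dt \<and> card X = j' \<longrightarrow> X \<in> F2"
    using Pst unfolding P_def by auto
  obtain a where a: "a \<in> S" "a \<noteq> s" "Ds = S - {s,a}" using get_a[OF fS s(1-3) assms(2)] by blast
  obtain b where b: "b \<in> S" "b \<noteq> t" "Dt = S - {t,b}" using get_a[OF fS t(1-3) assms(2)] by blast
  have full: "S - {c} \<in> F1" if "c \<in> S" "c \<noteq> x" "x \<in> S" "k > 0" "k + m = card S - 1" "m > 0"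
    "\<forall>X. X \<subseteq> S - {x,c} \<and> card X = k \<longrightarrow> insert x X \<in> F1" for c x k m
  proof -
    have H: "\<forall>X. X \<subseteq> S - {x,c} \<and> card X = k \<longrightarrow> {x} \<union> X \<in> F1" using that(7) by simp
    have "card (S - {x,c}) = card S - 2" using that fS by (simp add: card_Diff_subset)
    then have "k \<le> card (S - {x,c})" using that by simp
    then have "{x} \<union> (S - {x,c}) \<in> F1"
      using up[OF F1 _ _ _ _ H, of "S - {x,c}"] fS that by auto
    moreover have "{x} \<union> (S - {x,c}) = S - {c}" using that by blast
    ultimately show ?thesis by simp
  qed
  have Sa: "S - {a} \<in> F1" using full[of a s i j] a s by auto
  have Sb: "S - {b} \<in> F1" using full[of b t i' j'] b t by auto
  have ab: "a = b"
  proof (rule ccontr)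
    assume nab: "a \<noteq> b"
    have c1: "card (S - {a}) = card S - 1" "card (S - {b}) = card S - 1" using a b fS by auto
    have I: "(S - {a}) \<inter> (S - {b}) = S - {a,b}" by blast
    have cI: "card (S - {a,b}) = card S - 2" using a b fS nab by (simp add: card_Diff_subset)
    have U: "(S - {a}) \<union> (S - {b}) = S" using nab by blast
    have "S \<in> F1" using fam_S2[OF F1 Sa Sb] c1 I cI U by simp
    then show False using fam_S3[OF F1] by simp
  qed
  show "s = t"
  proof (rule ccontr)
    assume st: "s \<noteq> t"
    show False
    proof (cases "j' \<le> j")
      case True
      have "a \<noteq> t" using b ab by simp
      moreover have "\<forall>X. X \<subseteq> S - {s,a} \<and> card X = i \<longrightarrow> insert s X \<in> F1" using s(7) a(3) by simp
      moreover have "\<forall>X. X \<subseteq> S - {s,a} \<and> card X = j \<longrightarrow> X \<in> F2" using s(8) a(3) by simp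
      moreover have "\<forall>X. X \<subseteq> S - {t,a} \<and> card X = j' \<longrightarrow> X \<in> F2" using t(8) b(3) ab by simp
      ultimately show False
        using core[OF assms(1,2) s(1) t(1) a(1) st a(2)[symmetric] _ s(4,5,6) t(5) True] by blast
    next
      case False
      then have jj: "j \<le> j'" by simp
      have "a \<noteq> t" using b ab by simp
      moreover have "\<forall>X. X \<subseteq> S - {t,a} \<and> card X = i' \<longrightarrow> insert t X \<in> F1" using t(7) b(3) ab by simp
      moreover have "\<forall>X. X \<subseteq> S - {t,a} \<and> card X = j' \<longrightarrow> X \<in> F2" using t(8) b(3) ab by simp
      moreover have "\<forall>X. X \<subseteq> S - {s,a} \<and> card X = j \<longrightarrow> X \<in> F2" using s(8) a(3) by simp
      ultimately show False
        using core[OF assms(1,2) t(1) s(1) a(1) st[symmetric] _ a(2)[symmetric] t(4,5,6) s(5) jj] by blast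
    qed
  qed
qed

end
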